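(* For every $n\ge 1$, the map $\Phi:\mathfrak{W}_n\to\mathcal{S}_n$ defined below is well defined (its output is a snake of length $n$) and is a bijection.
   Context: Let $[n]=\{1,\dots,n\}$ and let $\mathfrak{S}_n$ be the set of permutations of $[n]$, written in one-line notation $\sigma=\sigma_1\cdots\sigma_n$. A signed permutation of length $n$ is a word $p_1\cdots p_n$ with $p_i\in\{\pm1,\dots,\pm n\}$ such that $|p_1|\cdots|p_n|\in\mathfrak{S}_n$. A snake of length $n$ is a signed permutation with $p_1>0$ and $p_1>p_2<p_3>p_4<\cdots$ (strict inequalities alternating, starting with a descent). Let $\mathcal{S}_n$ denote the set of snakes of length $n$. A weakly increasing 3-dimensional permutation (3-WIP) of length $n$ is a pair $(\sigma,\pi)\in\mathfrak{S}_n^2$ with $\max(\sigma_1,\pi_1)\le\max(\sigma_2,\pi_2)\le\cdots\le\max(\sigma_n,\pi_n)$. Let $\mathfrak{W}_n$ be the set of these. For $\tau\in\mathfrak{S}_n$, a letter $k\in\{2,\dots,n\}$ is a cycle peak of $\tau$ if $\tau^{-1}(k)<k>\tau(k)$. The standard cycle form of $\tau$ writes each cycle with its largest element first and lists the cycles from left to right in increasing order of their largest elements. Foata's map $f:\mathfrak{S}_n\to\mathfrak{S}_n$ sends $\tau$ to the word obtained by erasing the parentheses of the standard cycle form of $\tau$. For a word $t=t_1\cdots t_n\in\mathfrak{S}_n$, set $t_0=0$, $t_{n+1}=+\infty$. Then $t_i$ is a left peak if $t_{i-1}<t_i>t_{i+1}$, and a right valley if $t_{i-1}>t_i<t_{i+1}$.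 Definition of $\Phi(\sigma,\pi)$ for $(\sigma,\pi)\in\mathfrak{W}_n$: (1) Let $\tau\in\mathfrak{S}_n$ be the permutation with $\tau(\sigma_i)=\pi_i$ for all $i$. Call a letter $k$ hatted if $k$ is a cycle peak of $\tau$ and there exists $\ell\in[n-1]$ with $\sigma_\ell=\pi_{\ell+1}=k$. (2) Let $\tilde\tau=f(\tau)$. The hatted letters keep their hats; they are left peaks of $\tilde\tau$. (3) Associate each right valley $\tilde\tau_i$ of $\tilde\tau$ with the left peak $\tilde\tau_j$ having the largest index $j<i$. Define $\Phi(\sigma,\pi)=p_1\cdots p_n$ by $p_i=-\tilde\tau_i$ if either (a) $i$ is even and $\tilde\tau_i$ is not a right valley, or (b) $\tilde\tau_i$ is a right valley whose associated left peak is hatted; and $p_i=\tilde\tau_i$ otherwise. Example: $(\sigma,\pi)=(152673894,\,256317849)$ gives $\tau=(5)(\hat7,1,2,6,3)(8)(\hat9,4)$, then $\tilde\tau=5\,\hat7\,1\,2\,6\,3\,8\,\hat9\,4$, and finally $\Phi(\sigma,\pi)=5\,\bar7\,\bar1\,\bar2\,6\,3\,8\,\bar9\,\bar4$, where $\bar k$ means $-k$. *)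

theory Defs
  imports Main
begin

text \<open>Permutations of [n] in one-line notation are lists (0-based list indices,
  letters 1..n). Signed permutations are int lists.\<close>

definition perm_list :: "nat \<Rightarrow> nat list \<Rightarrow> bool" where
  "perm_list n xs \<longleftrightarrow> length xs = n \<and> distinct xs \<and> set xs = {1..n}"

definition snakes :: "nat \<Rightarrow> int list set" where
  "snakes n = {ps. length ps = n
      \<and> perm_list n (map (\<lambda>p. nat \<bar>p\<bar>) ps)
      \<and> (n \<ge> 1 \<longrightarrow> ps ! 0 > 0)
      \<and> (\<forall>i. i + 1 < n \<longrightarrow> (if even i then ps ! i > ps ! (i+1) else ps ! i < ps ! (i+1)))}"

definition WIP :: "nat \<Rightarrow> (nat list \<times> nat list) set" where
  "WIP n = {(\<sigma>, \<pi>). perm_list n \<sigma> \<and> perm_list n \<pi>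
      \<and> (\<forall>i. i + 1 < n \<longrightarrow> max (\<sigma> ! i) (\<pi> ! i) \<le> max (\<sigma> ! (i+1)) (\<pi> ! (i+1)))}"

definition tau_of :: "nat list \<Rightarrow> nat list \<Rightarrow> nat \<Rightarrow> nat" where
  "tau_of \<sigma> \<pi> k = (if k \<in> set \<sigma> then \<pi> ! (LEAST i. i < length \<sigma> \<and> \<sigma> ! i = k) else k)"

definition cycle_peak :: "nat \<Rightarrow> (nat \<Rightarrow> nat) \<Rightarrow> nat \<Rightarrow> bool" where
  "cycle_peak n \<tau> k \<longleftrightarrow> 2 \<le> k \<and> k \<le> n \<and> inv_into {1..n} \<tau> k < k \<and> \<tau> k < k"

definition cycle_from :: "(nat \<Rightarrow> nat) \<Rightarrow> nat \<Rightarrow> nat list" where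
  "cycle_from \<tau> m = map (\<lambda>j. (\<tau> ^^ j) m) [0..<(LEAST j. 0 < j \<and> (\<tau> ^^ j) m = m)]"

definition cycle_maxima :: "nat \<Rightarrow> (nat \<Rightarrow> nat) \<Rightarrow> nat list" where
  "cycle_maxima n \<tau> = filter (\<lambda>m. \<forall>j. (\<tau> ^^ j) m \<le> m) [1..<n+1]"

text \<open>Foata's map: erase parentheses from the standard cycle form.\<close>
definition foata :: "nat \<Rightarrow> (nat \<Rightarrow> nat) \<Rightarrow> nat list" where
  "foata n \<tau> = concat (map (cycle_from \<tau>) (cycle_maxima n \<tau>))"

text \<open>Left peaks / right valleys of a word t (0-based position i), with t_0 = 0 and
  t_{n+1} = +infinity in the paper's 1-based convention.\<close>
definition left_peak :: "nat list \<Rightarrow> nat \<Rightarrow> bool" where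
  "left_peak t i \<longleftrightarrow> i < length t \<and> (i = 0 \<or> t ! (i-1) < t ! i)
      \<and> i + 1 < length t \<and> t ! i > t ! (i+1)"

definition right_valley :: "nat list \<Rightarrow> nat \<Rightarrow> bool" where
  "right_valley t i \<longleftrightarrow> i < length t \<and> 0 < i \<and> t ! (i-1) > t ! i
      \<and> (i + 1 = length t \<or> t ! i < t ! (i+1))"

definition hatted :: "nat list \<Rightarrow> nat list \<Rightarrow> nat \<Rightarrow> bool" where
  "hatted \<sigma> \<pi> k \<longleftrightarrow> cycle_peak (length \<sigma>) (tau_of \<sigma> \<pi>) k
      \<and> (\<exists>l. l + 1 < length \<sigma> \<and> \<sigma> ! l = k \<and> \<pi> ! (l+1) = k)"

text \<open>The map Phi. Position i here is 0-based, so "i even" in the paper is "odd i" here.\<close>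
definition Phi :: "nat list \<Rightarrow> nat list \<Rightarrow> int list" where
  "Phi \<sigma> \<pi> = (let n = length \<sigma>; t = foata n (tau_of \<sigma> \<pi>) in
     map (\<lambda>i. if (odd i \<and> \<not> right_valley t i)
                 \<or> (right_valley t i \<and> hatted \<sigma> \<pi> (t ! (GREATEST j. j < i \<and> left_peak t j)))
               then - int (t ! i) else int (t ! i)) [0..<n])"

end

theory Submission
  imports Defs "HOL-Combinatorics.Combinatorics"
begin


definition pk :: "nat list \<Rightarrow> nat \<Rightarrow> nat" where
  "pk t i = (GREATEST j. j < i \<and> left_peak t j)"

definition sg :: "nat list \<Rightarrow> (nat \<Rightarrow> bool) \<Rightarrow> nat \<Rightarrow> int" where
  "sg t h i = (if (odd i \<and> \<not> right_valley t i) \<or> (right_valley t i \<and> h (t ! pk t i))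
               then - int (t ! i) else int (t ! i))"

lemma Phi_sg: "Phi \<sigma> \<pi> = map (sg (foata (length \<sigma>) (tau_of \<sigma> \<pi>)) (hatted \<sigma> \<pi>)) [0..<length \<sigma>]"
  unfolding Phi_def sg_def pk_def Let_def by simp

lemma least_obtain:
  fixes P :: "nat \<Rightarrow> bool"
  assumes "P a"
  obtains k where "P k" "\<And>k'. P k' \<Longrightarrow> k \<le> k'" "k \<le> a"
proof -
  have "P (Least P)" using assms by (rule LeastI)
  moreover have "\<And>k'. P k' \<Longrightarrow> Least P \<le> k'" by (rule Least_le)
  ultimately show ?thesis using that assms by blast
qed

lemma dist_nth_neq:
  assumes "distinct t" "a < length t" "b < length t" "a \<noteq> b"
  shows "t ! a \<noteq> t ! b"
  using assms by (simp add: nth_eq_iff_index_eq)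

lemma rv_exists_peak:
  assumes d: "distinct t" and rv: "right_valley t i"
  shows "\<exists>j<i. left_peak t j"
proof -
  let ?P = "\<lambda>k. k < i \<and> (\<forall>m. k \<le> m \<and> m < i \<longrightarrow> t ! m > t ! (m+1))"
  have i: "0 < i" "i < length t" "t ! (i-1) > t ! i" using rv unfolding right_valley_def by auto
  have "?P (i-1)"
  proof (intro conjI allI impI)
    show "i - 1 < i" using i by simp
    fix m assume "i - 1 \<le> m \<and> m < i"
    then have "m + 1 = i" "m = i - 1" using i by auto
    then show "t ! m > t ! (m+1)" using i by simp
  qed
  define k where "k = Least ?P"
  have Pk: "?P k" unfolding k_def by (rule LeastI) fact
  have kmin: "\<And>k'. ?P k' \<Longrightarrow> k \<le> k'" unfolding k_def by (rule Least_le)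
  have kl: "k < length t" using Pk i by simp
  have "left_peak t k"
  proof -
    have "k = 0 \<or> t ! (k-1) < t ! k"
    proof (cases "k = 0")
      case False
      have "\<not> ?P (k-1)" using kmin False by force
      then obtain m where m: "k - 1 \<le> m" "m < i" "\<not> t ! m > t ! (m+1)" using Pk False by auto
      have "m = k - 1"
      proof (rule ccontr)
        assume "m \<noteq> k - 1" then have "k \<le> m" using m(1) by linarith
        with Pk m show False by auto
      qed
      moreover have "t ! (k-1) \<noteq> t ! k" using dist_nth_neq[OF d, of "k-1" k] kl False by simp
      moreover have "m + 1 = k" using \<open>m = k - 1\<close> False by simp
      ultimately show ?thesis using m by auto
    qed simp
    moreover have "t ! k > t ! (k+1)" using Pk by simp
    ultimately show ?thesis using Pk i unfolding left_peak_def by auto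
  qed
  then show ?thesis using Pk by blast
qed

lemma pk_props:
  assumes d: "distinct t" and rv: "right_valley t i"
  shows "pk t i < i" "left_peak t (pk t i)"
proof -
  obtain j where "j < i" "left_peak t j" using rv_exists_peak[OF assms] by blast
  then have "pk t i < i \<and> left_peak t (pk t i)" unfolding pk_def
    by - (rule GreatestI_ex_nat[where b=i], auto)
  then show "pk t i < i" "left_peak t (pk t i)" by auto
qed

lemma peak_has_valley:
  assumes d: "distinct t" and lp: "left_peak t j"
  shows "\<exists>i. right_valley t i \<and> pk t i = j"
proof -
  let ?P = "\<lambda>i. j < i \<and> (i + 1 = length t \<or> t ! i < t ! (i+1))"
  have j: "j + 1 < length t" "t ! j > t ! (j+1)" using lp unfolding left_peak_def by auto
  have "?P (length t - 1)" using j by auto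
  define i where "i = Least ?P"
  have Pi: "?P i" unfolding i_def by (rule LeastI) fact
  have imin: "\<And>k'. ?P k' \<Longrightarrow> i \<le> k'" unfolding i_def by (rule Least_le)
  have "i \<le> length t - 1" by (rule imin) fact
  then have iln: "i < length t" using j by linarith
  have dec: "t ! m > t ! (m+1)" if "j \<le> m" "m < i" for m
  proof (cases "m = j")
    case True then show ?thesis using j by simp
  next
    case False
    then have "\<not> ?P m" using that imin by force
    moreover have "t ! m \<noteq> t ! (m+1)" using dist_nth_neq[OF d, of m "m+1"] that iln by simp
    ultimately show ?thesis using that False iln by auto
  qed
  have rv: "right_valley t i"
    unfolding right_valley_def using Pi iln dec[of "i-1"] by auto
  have "pk t i = j" unfolding pk_def
  proof (rule Greatest_equality)
    show "j < i \<and> left_peak t j" using Pi lp by simp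
    fix y assume y: "y < i \<and> left_peak t y"
    show "y \<le> j"
    proof (rule ccontr)
      assume "\<not> y \<le> j"
      then have "t ! (y-1) > t ! y" using dec[of "y-1"] y by auto
      then show False using y \<open>\<not> y \<le> j\<close> unfolding left_peak_def by auto
    qed
  qed
  then show ?thesis using rv by blast
qed

lemma pk_inj:
  assumes d: "distinct t" and rv: "right_valley t i" "right_valley t i'" and eq: "pk t i = pk t i'"
  shows "i = i'"
proof (rule ccontr)
  assume ne: "i \<noteq> i'"
  have main: False if rv1: "right_valley t a" and rv2: "right_valley t b" and ab: "a < b"
     and e: "pk t a = pk t b" for a b
  proof -
    have b: "b < length t" "0 < b" "t ! (b-1) > t ! b" using rv2 unfolding right_valley_def by auto
    have a: "t ! a < t ! (a+1)" using rv1 ab b unfolding right_valley_def by auto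
    let ?P = "\<lambda>k. a < k \<and> k + 1 < length t \<and> t ! k > t ! (k+1)"
    have "b - 1 \<noteq> a"
    proof
      assume ba: "b - 1 = a" then have "b = a + 1" using b by simp
      with a b ba show False by simp
    qed
    then have "?P (b-1)" using ab b by auto
    define k where "k = Least ?P"
    have Pk: "?P k" unfolding k_def by (rule LeastI) fact
    have kmin: "\<And>k'. ?P k' \<Longrightarrow> k \<le> k'" unfolding k_def by (rule Least_le)
    have kb: "k \<le> b - 1" by (rule kmin) fact
    have "t ! (k-1) < t ! k"
    proof (cases "k - 1 = a")
      case True then have "k = a + 1" using Pk by linarith
      then show ?thesis using a True by simp
    next
      case False
      then have "\<not> ?P (k-1)" using kmin Pk by force
      moreover have "t ! (k-1) \<noteq> t ! k"
      proof -
        have "k-1 < length t" "k - 1 \<noteq> k" "k < length t" using Pk by auto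
        then show ?thesis using dist_nth_neq[OF d] by blast
      qed
      moreover have "k - 1 + 1 = k" using Pk by simp
      ultimately show ?thesis using Pk False by auto
    qed
    then have lpk: "left_peak t k" using Pk unfolding left_peak_def by auto
    have "k \<le> pk t b" unfolding pk_def
      by (rule Greatest_le_nat[where b=b]) (use lpk kb b in auto)
    moreover have "pk t a < a" using pk_props[OF d rv1] by simp
    ultimately show False using e Pk by simp
  qed
  show False
  proof (cases "i < i'")
    case True then show ?thesis using main[OF rv] eq by blast
  next
    case False then have "i' < i" using ne by simp
    then show ?thesis using main[OF rv(2) rv(1)] eq by simp
  qed
qed


lemma perm_list_nth: "perm_list n t \<Longrightarrow> i < n \<Longrightarrow> t ! i \<in> {1..n}"
  unfolding perm_list_def by (metis nth_mem)

lemma rv_lt_next: "right_valley t i \<Longrightarrow> i + 1 < length t \<Longrightarrow> t ! i < t ! (i+1)"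
  unfolding right_valley_def by auto

lemma rv_lt_prev: "right_valley t (i+1) \<Longrightarrow> t ! (i+1) < t ! i"
  unfolding right_valley_def by auto

lemma not_rv_0: "\<not> right_valley t 0"
  unfolding right_valley_def by auto

lemma sg_nrv: "\<not> right_valley t i \<Longrightarrow> sg t h i = (if odd i then - int (t ! i) else int (t ! i))"
  unfolding sg_def by auto

lemma sg_rv: "right_valley t i \<Longrightarrow> sg t h i = (if h (t ! pk t i) then - int (t ! i) else int (t ! i))"
  unfolding sg_def by auto

lemma sg_pm: "sg t h i = int (t ! i) \<or> sg t h i = - int (t ! i)"
  unfolding sg_def by auto

lemma sg_snake:
  assumes pl: "perm_list n t"
  shows "map (sg t h) [0..<n] \<in> snakes n"
proof -
  have lt: "length t = n" using pl unfolding perm_list_def by simp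
  have pos: "t ! j \<ge> 1" if "j < n" for j using perm_list_nth[OF pl that] by simp
  have abs: "map (\<lambda>p. nat \<bar>p\<bar>) (map (sg t h) [0..<n]) = t"
  proof (rule nth_equalityI)
    show "length (map (\<lambda>p. nat \<bar>p\<bar>) (map (sg t h) [0..<n])) = length t" using lt by simp
    fix j assume "j < length (map (\<lambda>p. nat \<bar>p\<bar>) (map (sg t h) [0..<n]))"
    then have j: "j < n" by simp
    show "map (\<lambda>p. nat \<bar>p\<bar>) (map (sg t h) [0..<n]) ! j = t ! j"
      using sg_pm[of t h j] j by auto
  qed
  have alt: "if even i then sg t h i > sg t h (i+1) else sg t h i < sg t h (i+1)"
    if i: "i + 1 < n" for i
  proof -
    have a: "t ! i \<ge> 1" "t ! (i+1) \<ge> 1" using pos i by auto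
    have sa: "sg t h i = int (t ! i) \<or> sg t h i = - int (t ! i)" by (rule sg_pm)
    have sb: "sg t h (i+1) = int (t ! (i+1)) \<or> sg t h (i+1) = - int (t ! (i+1))" by (rule sg_pm)
    show ?thesis
    proof (cases "right_valley t i")
      case True
      then have lt1: "t ! i < t ! (i+1)" using rv_lt_next i lt by simp
      then have "\<not> right_valley t (i+1)" using rv_lt_prev by fastforce
      then have "sg t h (i+1) = (if odd (i+1) then - int (t ! (i+1)) else int (t ! (i+1)))" by (rule sg_nrv)
      then show ?thesis using sa lt1 a by auto
    next
      case nr: False
      then have si: "sg t h i = (if odd i then - int (t ! i) else int (t ! i))" by (rule sg_nrv)
      show ?thesis
      proof (cases "right_valley t (i+1)")
        case True
        then have "t ! (i+1) < t ! i" by (rule rv_lt_prev)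
        then show ?thesis using si sb a by auto
      next
        case False
        then have "sg t h (i+1) = (if odd (i+1) then - int (t ! (i+1)) else int (t ! (i+1)))" by (rule sg_nrv)
        then show ?thesis using si a by auto
      qed
    qed
  qed
  have first: "n \<ge> 1 \<longrightarrow> map (sg t h) [0..<n] ! 0 > 0"
  proof
    assume "n \<ge> 1"
    then have "t ! 0 \<ge> 1" using pos by simp
    moreover have "sg t h 0 = int (t ! 0)" using sg_nrv[OF not_rv_0] by simp
    ultimately show "map (sg t h) [0..<n] ! 0 > 0" using \<open>n \<ge> 1\<close> by simp
  qed
  let ?M = "map (sg t h) [0..<n]"
  have alt2: "\<forall>i. i + 1 < n \<longrightarrow> (if even i then ?M ! i > ?M ! (i+1) else ?M ! i < ?M ! (i+1))"
  proof (intro allI impI)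
    fix i assume i: "i + 1 < n"
    have e1: "?M ! i = sg t h i" and e2: "?M ! (i+1) = sg t h (i+1)" using i by auto
    show "if even i then ?M ! i > ?M ! (i+1) else ?M ! i < ?M ! (i+1)" unfolding e1 e2 by (rule alt[OF i])
  qed
  have "length ?M = n" by simp
  then show ?thesis unfolding snakes_def mem_Collect_eq
  proof (intro conjI)
    show "perm_list n (map (\<lambda>p. nat \<bar>p\<bar>) ?M)" using abs pl by simp
  qed (use first alt2 in \<open>simp_all only:\<close>)
qed

lemma snake_entry:
  assumes q: "q \<in> snakes n" and j: "j < n"
  shows "q ! j = int (nat \<bar>q ! j\<bar>) \<or> q ! j = - int (nat \<bar>q ! j\<bar>)" "nat \<bar>q ! j\<bar> \<ge> 1"
proof -
  have pl: "perm_list n (map (\<lambda>p. nat \<bar>p\<bar>) q)" and lq: "length q = n" using q unfolding snakes_def by auto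
  have "map (\<lambda>p. nat \<bar>p\<bar>) q ! j \<in> {1..n}" using perm_list_nth[OF pl j] .
  then show "nat \<bar>q ! j\<bar> \<ge> 1" using j lq by simp
  show "q ! j = int (nat \<bar>q ! j\<bar>) \<or> q ! j = - int (nat \<bar>q ! j\<bar>)" by auto
qed

lemma snake_rep:
  assumes q: "q \<in> snakes n" and t: "t = map (\<lambda>p. nat \<bar>p\<bar>) q"
    and hyp: "\<And>i. i < n \<Longrightarrow> right_valley t i \<Longrightarrow> (h (t ! pk t i) \<longleftrightarrow> q ! i < 0)"
  shows "q = map (sg t h) [0..<n]"
proof -
  have lq: "length q = n" and pl: "perm_list n t" and q0: "n \<ge> 1 \<longrightarrow> q ! 0 > 0"
    and alt: "\<And>i. i + 1 < n \<Longrightarrow> (if even i then q ! i > q ! (i+1) else q ! i < q ! (i+1))"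
    using q t unfolding snakes_def by auto
  have lt: "length t = n" "distinct t" using pl unfolding perm_list_def by auto
  have tj: "t ! j = nat \<bar>q ! j\<bar>" if "j < n" for j using that lq t by simp
  have qe: "q ! j = int (t ! j) \<or> q ! j = - int (t ! j)" "t ! j \<ge> 1" if "j < n" for j
    using snake_entry[OF q that] tj[OF that] by auto
  show ?thesis
  proof (rule nth_equalityI)
    show "length q = length (map (sg t h) [0..<n])" using lq by simp
    fix i assume "i < length q"
    then have i: "i < n" using lq by simp
    show "q ! i = map (sg t h) [0..<n] ! i"
    proof (cases "right_valley t i")
      case True
      then show ?thesis using sg_rv[OF True, of h] hyp[OF i True] qe[OF i] i by auto
    next
      case False
      have "q ! i = (if odd i then - int (t ! i) else int (t ! i))"
      proof (cases "i = 0")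
        case True then show ?thesis using q0 i qe[OF i] by auto
      next
        case i0: False
        have i1: "i - 1 < n" "i - 1 + 1 = i" using i i0 by auto
        have nb: "t ! (i-1) < t ! i \<or> (i + 1 < n \<and> t ! i > t ! (i+1))"
        proof -
          have "t ! (i-1) \<noteq> t ! i" using dist_nth_neq[OF lt(2), of "i-1" i] i i0 lt by auto
          moreover have "i + 1 < n \<Longrightarrow> t ! (i+1) \<noteq> t ! i" using dist_nth_neq[OF lt(2), of "i+1" i] lt by auto
          ultimately show ?thesis using False i0 i lt unfolding right_valley_def by auto
        qed
        have prev: "if even (i-1) then q ! (i-1) > q ! i else q ! (i-1) < q ! i"
        proof -
          have "i - 1 + 1 < n" using i1 i by simp
          from alt[OF this] show ?thesis unfolding i1(2) .
        qed
        have nxt: "i + 1 < n \<Longrightarrow> (if even i then q ! i > q ! (i+1) else q ! i < q ! (i+1))"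
          by (rule alt)
        have nxt2: "i + 1 < n \<Longrightarrow> q ! (i+1) = int (t ! (i+1)) \<or> q ! (i+1) = - int (t ! (i+1))"
          using qe by simp
        show ?thesis
        proof (cases "even i")
          case True
          then have "odd (i-1)" using i0 by simp
          then show ?thesis using True prev nxt nxt2 nb qe[OF i] qe[OF i1(1)] by auto
        next
          case False
          then have "even (i-1)" using i0 by simp
          then show ?thesis using False prev nxt nxt2 nb qe[OF i] qe[OF i1(1)] by auto
        qed
      qed
      then show ?thesis using sg_nrv[OF False, of h] i by simp
    qed
  qed
qed


definition per :: "(nat \<Rightarrow> nat) \<Rightarrow> nat \<Rightarrow> nat" where
  "per f m = (LEAST j. 0 < j \<and> (f ^^ j) m = m)"

definition orb :: "(nat \<Rightarrow> nat) \<Rightarrow> nat \<Rightarrow> nat set" where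
  "orb f m = range (\<lambda>j. (f ^^ j) m)"

definition cm :: "(nat \<Rightarrow> nat) \<Rightarrow> nat \<Rightarrow> bool" where
  "cm f m \<longleftrightarrow> (\<forall>j. (f ^^ j) m \<le> m)"

lemma per_prop:
  assumes "permutation f"
  shows "0 < per f m" "(f ^^ per f m) m = m"
proof -
  obtain N where N: "(f ^^ N) = id" "N > 0" using permutation_is_nilpotent[OF assms] by blast
  have "0 < N \<and> (f ^^ N) m = m" using N by simp
  then have "0 < per f m \<and> (f ^^ per f m) m = m" unfolding per_def by (rule LeastI)
  then show "0 < per f m" "(f ^^ per f m) m = m" by auto
qed

lemma per_min: "0 < j \<Longrightarrow> j < per f m \<Longrightarrow> (f ^^ j) m \<noteq> m"
  unfolding per_def using not_less_Least by blast

lemma funpow_mult_fix: "(f ^^ p) m = m \<Longrightarrow> (f ^^ (q * p)) m = m"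
proof (induction q)
  case (Suc q)
  have "(f ^^ (Suc q * p)) m = (f ^^ p) ((f ^^ (q * p)) m)"
    by (simp add: funpow_add add.commute)
  then show ?case using Suc by simp
qed simp

lemma funpow_mod_per:
  assumes "permutation f"
  shows "(f ^^ j) m = (f ^^ (j mod per f m)) m"
proof -
  have e: "j = j mod per f m + (j div per f m) * per f m" using mod_div_mult_eq[of j "per f m"] by simp
  have "(f ^^ (j mod per f m + (j div per f m) * per f m)) m = (f ^^ (j mod per f m)) ((f ^^ ((j div per f m) * per f m)) m)"
    by (simp only: funpow_add comp_apply)
  then have "(f ^^ j) m = (f ^^ (j mod per f m)) ((f ^^ ((j div per f m) * per f m)) m)"
    using e by simp
  also have "(f ^^ ((j div per f m) * per f m)) m = m"
    by (rule funpow_mult_fix) (rule per_prop(2)[OF assms])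
  finally show ?thesis .
qed

lemma funpow_inj_lt:
  assumes pf: "permutation f" and i: "i < per f m" and j: "j < per f m"
    and eq: "(f ^^ i) m = (f ^^ j) m"
  shows "i = j"
proof (rule ccontr)
  assume ne: "i \<noteq> j"
  have inj: "inj (f ^^ k)" for k using pf permutation_bijective bij_is_inj inj_fn by blast
  have main: False if ab: "a < b" "b < per f m" "(f ^^ a) m = (f ^^ b) m" for a b
  proof -
    have e: "b = a + (b - a)" using ab by simp
    have "(f ^^ (a + (b - a))) m = (f ^^ a) ((f ^^ (b - a)) m)"
      by (simp only: funpow_add comp_apply)
    then have "(f ^^ b) m = (f ^^ a) ((f ^^ (b - a)) m)" using e by simp
    then have "(f ^^ a) ((f ^^ (b - a)) m) = (f ^^ a) m" using ab(3) by simp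
    then have "(f ^^ (b - a)) m = m" by (rule injD[OF inj[of a]])
    moreover have "0 < b - a" "b - a < per f m" using ab by auto
    ultimately show False using per_min by blast
  qed
  show False
  proof (cases "i < j")
    case True then show ?thesis using main[of i j] j eq by simp
  next
    case False then show ?thesis using main[of j i] i eq ne by simp
  qed
qed

lemma cycle_from_eq: "cycle_from f m = map (\<lambda>j. (f ^^ j) m) [0..<per f m]"
  unfolding cycle_from_def per_def by simp

lemma cf_length: "length (cycle_from f m) = per f m"
  by (simp add: cycle_from_eq)

lemma cf_nth: "j < per f m \<Longrightarrow> cycle_from f m ! j = (f ^^ j) m"
  by (simp add: cycle_from_eq)

lemma cf_distinct: "permutation f \<Longrightarrow> distinct (cycle_from f m)"
  unfolding cycle_from_eq distinct_map
  by (auto simp: inj_on_def intro: funpow_inj_lt)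

lemma cf_set:
  assumes pf: "permutation f"
  shows "set (cycle_from f m) = orb f m"
proof
  show "set (cycle_from f m) \<subseteq> orb f m" unfolding cycle_from_eq orb_def by auto
  show "orb f m \<subseteq> set (cycle_from f m)"
  proof
    fix y assume "y \<in> orb f m"
    then obtain j where j: "y = (f ^^ j) m" unfolding orb_def by auto
    have "j mod per f m < per f m" using per_prop(1)[OF pf, of m] by simp
    then have "(f ^^ (j mod per f m)) m \<in> set (cycle_from f m)" unfolding cycle_from_eq by auto
    then show "y \<in> set (cycle_from f m)" using funpow_mod_per[OF pf, of j m] j by simp
  qed
qed

lemma cf_nonempty: "permutation f \<Longrightarrow> cycle_from f m \<noteq> []"
  using per_prop(1) by (simp add: cycle_from_eq)

lemma cf_hd: "permutation f \<Longrightarrow> hd (cycle_from f m) = m"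
  using per_prop(1)[of f m] by (simp add: cycle_from_eq hd_map upt_conv_Cons)

lemma cf_last: "permutation f \<Longrightarrow> f (last (cycle_from f m)) = m"
proof -
  assume pf: "permutation f"
  have p: "0 < per f m" using per_prop(1)[OF pf] .
  have "last (cycle_from f m) = (f ^^ (per f m - 1)) m"
    using p by (simp add: cycle_from_eq last_map)
  then have "f (last (cycle_from f m)) = (f ^^ (Suc (per f m - 1))) m" by simp
  also have "Suc (per f m - 1) = per f m" using p by simp
  finally show ?thesis using per_prop(2)[OF pf] by simp
qed

lemma cf_succ:
  assumes pf: "permutation f" and c: "cycle_from f m = us @ a # b # vs"
  shows "b = f a"
proof -
  let ?k = "length us"
  have "length (cycle_from f m) = ?k + 2 + length vs" using c by simp
  then have len: "?k + 1 < per f m" using cf_length[of f m] by simp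
  have "a = cycle_from f m ! ?k" using c by simp
  moreover have "b = cycle_from f m ! (?k + 1)" using c by (simp add: nth_append)
  ultimately show ?thesis using len cf_nth[of "?k" f m] cf_nth[of "?k+1" f m] by simp
qed

lemma orb_funpow: "(f ^^ j) m \<in> orb f m"
  unfolding orb_def by simp

lemma orb_self: "m \<in> orb f m"
  using orb_funpow[where j=0 and f=f and m=m] by simp

lemma orb_trans: "x \<in> orb f m \<Longrightarrow> orb f x \<subseteq> orb f m"
proof
  fix y assume x: "x \<in> orb f m" and y: "y \<in> orb f x"
  obtain a where a: "x = (f ^^ a) m" using x unfolding orb_def by auto
  obtain j where j: "y = (f ^^ j) x" using y unfolding orb_def by auto
  have "(f ^^ (j + a)) m = (f ^^ j) ((f ^^ a) m)" by (simp only: funpow_add comp_apply)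
  then have "y = (f ^^ (j + a)) m" using a j by simp
  then show "y \<in> orb f m" unfolding orb_def by blast
qed

lemma orb_sym:
  assumes pf: "permutation f" and x: "x \<in> orb f m"
  shows "m \<in> orb f x"
proof -
  obtain a where a: "x = (f ^^ a) m" using x unfolding orb_def by auto
  let ?p = "per f m"
  let ?r = "a mod ?p"
  have p: "0 < ?p" using per_prop(1)[OF pf] .
  have x': "x = (f ^^ ?r) m" using a funpow_mod_per[OF pf] by simp
  have r: "?r < ?p" using p by simp
  have "(f ^^ (?p - ?r + ?r)) m = (f ^^ (?p - ?r)) ((f ^^ ?r) m)" by (simp only: funpow_add comp_apply)
  then have "(f ^^ (?p - ?r)) x = (f ^^ (?p - ?r + ?r)) m" using x' by simp
  also have "?p - ?r + ?r = ?p" using r by simp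
  finally have "(f ^^ (?p - ?r)) x = m" using per_prop(2)[OF pf] by simp
  then show ?thesis unfolding orb_def by (metis rangeI)
qed

lemma orb_eq: "permutation f \<Longrightarrow> x \<in> orb f m \<Longrightarrow> orb f x = orb f m"
  using orb_trans orb_sym by blast

lemma orb_subset:
  assumes fS: "f permutes S" and m: "m \<in> S" shows "orb f m \<subseteq> S"
proof
  fix y assume "y \<in> orb f m"
  then obtain j where j: "y = (f ^^ j) m" unfolding orb_def by auto
  have fj: "(f ^^ j) permutes S" using permutes_funpow[OF fS] .
  show "y \<in> S" using permutes_in_image[OF fj, of m] j m by simp
qed

lemma orb_f: "f x \<in> orb f x"
  using orb_funpow[where j=1 and f=f and m=x] by simp


lemma cm_orb_le: "cm f M \<Longrightarrow> y \<in> orb f M \<Longrightarrow> y \<le> M"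
  unfolding cm_def orb_def by auto

lemma perm_S: fixes f :: "nat \<Rightarrow> nat" assumes "f permutes {1..n}" shows "permutation f"
  by (rule permutes_imp_permutation[of "{1..n}"]) (rule finite_atLeastAtMost, rule assms)

lemma cmax_exists:
  assumes fS: "f permutes {1..n}" and x: "x \<in> {1..n}"
  shows "\<exists>M. cm f M \<and> M \<in> {1..n} \<and> x \<in> orb f M"
proof -
  have pf: "permutation f" using perm_S[OF fS] .
  have sub: "orb f x \<subseteq> {1..n}" using orb_subset[OF fS x] .
  have fin: "finite (orb f x)" using sub finite_subset by blast
  have ne: "orb f x \<noteq> {}" using orb_self by blast
  define M where "M = Max (orb f x)"
  have Mo: "M \<in> orb f x" unfolding M_def using fin ne by (rule Max_in)
  have oM: "orb f M = orb f x" using orb_eq[OF pf Mo] .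
  have "cm f M" unfolding cm_def
  proof
    fix j
    have "(f ^^ j) M \<in> orb f x" using orb_funpow[where j=j and f=f and m=M] oM by simp
    then show "(f ^^ j) M \<le> M" unfolding M_def using fin by simp
  qed
  moreover have "M \<in> {1..n}" using Mo sub by blast
  moreover have "x \<in> orb f M" using orb_self[of x f] oM by simp
  ultimately show ?thesis by blast
qed

lemma cm_eq:
  assumes pf: "permutation f" and c1: "cm f m1" and c2: "cm f m2"
    and x1: "x \<in> orb f m1" and x2: "x \<in> orb f m2"
  shows "m1 = m2"
proof -
  have "orb f m1 = orb f m2" using orb_eq[OF pf x1] orb_eq[OF pf x2] by simp
  then have "m1 \<in> orb f m2" "m2 \<in> orb f m1" using orb_self[of m1 f] orb_self[of m2 f] by auto
  then show ?thesis using cm_orb_le[OF c1] cm_orb_le[OF c2] by (meson antisym)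
qed

lemma cycle_maxima_eq: "cycle_maxima n f = filter (cm f) [1..<n+1]"
  unfolding cycle_maxima_def cm_def by simp

lemma set_cycle_maxima: "set (cycle_maxima n f) = {m \<in> {1..n}. cm f m}"
  unfolding cycle_maxima_eq by auto

lemma sorted_cycle_maxima: "sorted_wrt (<) (cycle_maxima n f)"
  unfolding cycle_maxima_eq by (rule sorted_wrt_filter[OF sorted_wrt_upt])

lemma foata_eq: "foata n f = concat (map (cycle_from f) (cycle_maxima n f))"
  unfolding foata_def by simp

lemma foata_set:
  assumes fS: "f permutes {1..n}"
  shows "set (foata n f) = {1..n}"
proof -
  have pf: "permutation f" using perm_S[OF fS] .
  have "set (foata n f) = (\<Union>m\<in>set (cycle_maxima n f). orb f m)"
    unfolding foata_eq using cf_set[OF pf] by simp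
  also have "\<dots> = {1..n}"
  proof
    show "(\<Union>m\<in>set (cycle_maxima n f). orb f m) \<subseteq> {1..n}"
      using orb_subset[OF fS] unfolding set_cycle_maxima by blast
    show "{1..n} \<subseteq> (\<Union>m\<in>set (cycle_maxima n f). orb f m)"
    proof
      fix x assume "x \<in> {1..n}"
      then obtain M where "cm f M" "M \<in> {1..n}" "x \<in> orb f M" using cmax_exists[OF fS] by blast
      then show "x \<in> (\<Union>m\<in>set (cycle_maxima n f). orb f m)" unfolding set_cycle_maxima by blast
    qed
  qed
  finally show ?thesis .
qed

lemma foata_distinct:
  assumes fS: "f permutes {1..n}"
  shows "distinct (foata n f)"
proof -
  have pf: "permutation f" using perm_S[OF fS] .
  let ?ms = "cycle_maxima n f"
  have dms: "distinct ?ms" using sorted_cycle_maxima strict_sorted_iff by blast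
  have injc: "inj_on (cycle_from f) (set ?ms)"
    by (rule inj_onI) (metis cf_hd[OF pf])
  show ?thesis unfolding foata_eq
  proof (rule distinct_concat)
    show "distinct (map (cycle_from f) ?ms)" using dms injc by (simp add: distinct_map)
    fix ys assume "ys \<in> set (map (cycle_from f) ?ms)"
    then show "distinct ys" using cf_distinct[OF pf] by auto
  next
    fix ys zs assume ys: "ys \<in> set (map (cycle_from f) ?ms)" and zs: "zs \<in> set (map (cycle_from f) ?ms)"
      and ne: "ys \<noteq> zs"
    obtain m1 where m1: "m1 \<in> set ?ms" "ys = cycle_from f m1" using ys by auto
    obtain m2 where m2: "m2 \<in> set ?ms" "zs = cycle_from f m2" using zs by auto
    have c: "cm f m1" "cm f m2" using m1 m2 unfolding set_cycle_maxima by auto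
    show "set ys \<inter> set zs = {}"
    proof (rule ccontr)
      assume "set ys \<inter> set zs \<noteq> {}"
      then obtain x where "x \<in> orb f m1" "x \<in> orb f m2" using m1 m2 cf_set[OF pf] by auto
      then have "m1 = m2" using cm_eq[OF pf c] by blast
      then show False using ne m1 m2 by simp
    qed
  qed
qed

lemma foata_perm_list:
  assumes fS: "f permutes {1..n}"
  shows "perm_list n (foata n f)"
proof -
  have "length (foata n f) = card (set (foata n f))"
    using foata_distinct[OF fS] by (simp add: distinct_card)
  then show ?thesis unfolding perm_list_def using foata_set[OF fS] foata_distinct[OF fS] by simp
qed

definition blocked :: "nat list list \<Rightarrow> bool" where
  "blocked bs \<longleftrightarrow> (\<forall>b\<in>set bs. b \<noteq> [] \<and> (\<forall>y\<in>set (tl b). y < hd b)) \<and> sorted_wrt (<) (map hd bs)"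

lemma blocked_unique:
  "blocked bs \<Longrightarrow> blocked cs \<Longrightarrow> concat bs = concat cs \<Longrightarrow> bs = cs"
proof (induction bs arbitrary: cs)
  case Nil
  then show ?case unfolding blocked_def by (cases cs) auto
next
  case (Cons b bs)
  have bne: "b \<noteq> []" using Cons.prems(1) unfolding blocked_def by simp
  then obtain c cs' where cs: "cs = c # cs'" using Cons.prems(3) by (cases cs) auto
  have cne: "c \<noteq> []" using Cons.prems(2) cs unfolding blocked_def by simp
  let ?L = "concat (b # bs)"
  define g where "g L = hd L # takeWhile (\<lambda>y. y < hd L) (tl L)" for L :: "nat list"
  have key: "g (concat (d # ds)) = d" if bl: "blocked (d # ds)" for d ds
  proof -
    have dne: "d \<noteq> []" and tl: "\<forall>y\<in>set (tl d). y < hd d" and so: "sorted_wrt (<) (map hd (d # ds))"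
      using bl unfolding blocked_def by auto
    have h: "hd (concat (d # ds)) = hd d" using dne by simp
    have t: "tl (concat (d # ds)) = tl d @ concat ds" using dne by simp
    have tw: "takeWhile (\<lambda>y. y < hd d) (concat ds) = []"
    proof (cases "concat ds = []")
      case False
      then obtain e es where ds: "ds = e # es" by (cases ds) auto
      have ene: "e \<noteq> []" using bl ds unfolding blocked_def by simp
      have "hd (concat ds) = hd e" using ds ene by simp
      moreover have "hd d < hd e" using so ds by simp
      ultimately show ?thesis using False by (simp add: takeWhile_eq_Nil_iff)
    next
      case True show ?thesis by (simp only: True takeWhile.simps(1))
    qed
    show ?thesis unfolding g_def h t using tl tw dne by simp
  qed
  have bc: "b = c" using key[OF Cons.prems(1)] key[of c cs'] Cons.prems(2,3) cs by simp
  have "concat bs = concat cs'" using Cons.prems(3) cs bc by simp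
  moreover have "blocked bs" using Cons.prems(1) unfolding blocked_def by simp
  moreover have "blocked cs'" using Cons.prems(2) cs unfolding blocked_def by simp
  ultimately have "bs = cs'" using Cons.IH by blast
  then show ?case using bc cs by simp
qed

lemma cf_tl_lt:
  assumes pf: "permutation f" and c: "cm f m" and y: "y \<in> set (tl (cycle_from f m))"
  shows "y < m"
proof -
  obtain k where k: "k < length (tl (cycle_from f m))" "y = tl (cycle_from f m) ! k"
    using y by (auto simp: in_set_conv_nth)
  have k1: "k + 1 < per f m" using k cf_length[of f m] by simp
  have "y = cycle_from f m ! (k+1)" using k by (simp add: nth_tl)
  then have yv: "y = (f ^^ (k+1)) m" using cf_nth[OF k1] by simp
  then have "y \<noteq> m" using per_min[of "k+1" f m] k1 by simp
  moreover have "y \<le> m" unfolding yv by (rule c[unfolded cm_def, rule_format])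
  ultimately show ?thesis by simp
qed

lemma foata_blocked:
  assumes pf: "permutation f"
  shows "blocked (map (cycle_from f) (cycle_maxima n f))"
  unfolding blocked_def
proof (rule conjI; (intro ballI)?)
  fix b assume "b \<in> set (map (cycle_from f) (cycle_maxima n f))"
  then obtain m where m: "m \<in> set (cycle_maxima n f)" "b = cycle_from f m" by auto
  have "cm f m" using m unfolding set_cycle_maxima by simp
  then show "b \<noteq> [] \<and> (\<forall>y\<in>set (tl b). y < hd b)"
    using m cf_nonempty[OF pf] cf_hd[OF pf] cf_tl_lt[OF pf] by simp
next
  have "map hd (map (cycle_from f) (cycle_maxima n f)) = cycle_maxima n f"
    using cf_hd[OF pf] by (simp add: map_idI)
  then show "sorted_wrt (<) (map hd (map (cycle_from f) (cycle_maxima n f)))"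
    using sorted_cycle_maxima by simp
qed

lemma cycle_recover:
  assumes pf: "permutation f" and x: "x \<in> set (cycle_from f m)"
  shows "f x = (case dropWhile (\<lambda>y. y \<noteq> x) (cycle_from f m) of
                  [_] \<Rightarrow> hd (cycle_from f m) | (_ # b # _) \<Rightarrow> b)"
proof -
  obtain us ws where c: "cycle_from f m = us @ x # ws" and nx: "x \<notin> set us"
    using split_list_first[OF x] by blast
  have dw: "dropWhile (\<lambda>y. y \<noteq> x) (cycle_from f m) = x # ws"
    using c nx by (simp add: dropWhile_append)
  show ?thesis
  proof (cases ws)
    case Nil
    then have "last (cycle_from f m) = x" using c by simp
    then have "f x = m" using cf_last[OF pf, of m] by simp
    then show ?thesis using dw Nil cf_hd[OF pf] by simp
  next
    case (Cons b vs)
    then have "b = f x" using cf_succ[OF pf] c by blast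
    then show ?thesis using dw Cons by simp
  qed
qed

lemma foata_inj:
  assumes fS: "f permutes {1..n}" and gS: "g permutes {1..n}"
    and eq: "foata n f = foata n g"
  shows "f = g"
proof
  fix x
  have pf: "permutation f" and pg: "permutation g" using perm_S[OF fS] perm_S[OF gS] by auto
  have "map (cycle_from f) (cycle_maxima n f) = map (cycle_from g) (cycle_maxima n g)"
    using blocked_unique[OF foata_blocked[OF pf] foata_blocked[OF pg]] eq unfolding foata_eq by blast
  then have mm: "map hd (map (cycle_from f) (cycle_maxima n f)) = map hd (map (cycle_from g) (cycle_maxima n g))"
    and bb: "map (cycle_from f) (cycle_maxima n f) = map (cycle_from g) (cycle_maxima n g)" by simp_all
  have ms: "cycle_maxima n f = cycle_maxima n g"
    using mm cf_hd[OF pf] cf_hd[OF pg] by (simp add: map_idI)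
  have cc: "cycle_from f m = cycle_from g m" if "m \<in> set (cycle_maxima n f)" for m
    using bb ms that by (simp add: map_eq_conv)
  show "f x = g x"
  proof (cases "x \<in> {1..n}")
    case False then show ?thesis using permutes_not_in[OF fS] permutes_not_in[OF gS] by simp
  next
    case True
    then obtain M where M: "cm f M" "M \<in> {1..n}" "x \<in> orb f M" using cmax_exists[OF fS] by blast
    have Mm: "M \<in> set (cycle_maxima n f)" using M unfolding set_cycle_maxima by simp
    have xf: "x \<in> set (cycle_from f M)" using M cf_set[OF pf] by simp
    then have xg: "x \<in> set (cycle_from g M)" using cc[OF Mm] by simp
    have "f x = (case dropWhile (\<lambda>y. y \<noteq> x) (cycle_from g M) of
                  [_] \<Rightarrow> hd (cycle_from g M) | (_ # b # _) \<Rightarrow> b)"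
      using cycle_recover[OF pf xf] unfolding cc[OF Mm] .
    then show ?thesis using cycle_recover[OF pg xg] by simp
  qed
qed


lemma concat_adj:
  assumes "\<forall>b\<in>set bs. b \<noteq> []" and "concat bs = xs @ a # c # ys"
  shows "(\<exists>b\<in>set bs. \<exists>us vs. b = us @ a # c # vs) \<or>
         (\<exists>us b1 b2 vs. bs = us @ b1 # b2 # vs \<and> a = last b1 \<and> c = hd b2)"
  using assms
proof (induction bs arbitrary: xs)
  case Nil then show ?case by simp
next
  case (Cons b bs)
  have eq: "b @ concat bs = xs @ (a # c # ys)" using Cons.prems(2) by simp
  have bne: "b \<noteq> []" using Cons.prems(1) by simp
  show ?case
  proof (cases "length xs < length b")
    case True
    define d where "d = drop (length xs) b"
    have tk: "take (length xs) b = xs" and dR: "d @ concat bs = a # c # ys"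
      using eq True unfolding d_def by (auto simp: append_eq_append_conv_if)
    have bd: "b = xs @ d" unfolding d_def using tk append_take_drop_id[of "length xs" b] by simp
    have dne: "d \<noteq> []" using True unfolding d_def by simp
    show ?thesis
    proof (cases d)
      case Nil then show ?thesis using dne by simp
    next
      case (Cons a' d')
      show ?thesis
      proof (cases d')
        case Nil
        have aa: "a' = a" and R: "concat bs = c # ys" using dR Cons Nil by auto
        obtain b2 bs' where bs: "bs = b2 # bs'" using R by (cases bs) auto
        have b2ne: "b2 \<noteq> []" using Cons.prems(1) bs by simp
        have "hd (concat bs) = hd b2" using bs b2ne by simp
        then have "c = hd b2" using R by simp
        moreover have "a = last b" using bd Cons Nil aa by simp
        ultimately have "b # bs = [] @ b # b2 # bs' \<and> a = last b \<and> c = hd b2" using bs by simp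
        then show ?thesis by blast
      next
        case (Cons c' d'')
        then have "b = xs @ a # c # d''" using bd \<open>d = a' # d'\<close> dR by auto
        then show ?thesis by auto
      qed
    qed
  next
    case False
    then have R: "concat bs = drop (length b) xs @ a # c # ys"
      using eq by (auto simp: append_eq_append_conv_if)
    have "(\<exists>b\<in>set bs. \<exists>us vs. b = us @ a # c # vs) \<or>
         (\<exists>us b1 b2 vs. bs = us @ b1 # b2 # vs \<and> a = last b1 \<and> c = hd b2)"
      using Cons.IH[OF _ R] Cons.prems(1) by simp
    then show ?thesis
    proof
      assume "\<exists>b\<in>set bs. \<exists>us vs. b = us @ a # c # vs"
      then show ?thesis by auto
    next
      assume "\<exists>us b1 b2 vs. bs = us @ b1 # b2 # vs \<and> a = last b1 \<and> c = hd b2"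
      then obtain us b1 b2 vs where "bs = us @ b1 # b2 # vs" "a = last b1" "c = hd b2" by blast
      then have "b # bs = (b # us) @ b1 # b2 # vs \<and> a = last b1 \<and> c = hd b2" by simp
      then show ?thesis by blast
    qed
  qed
qed

lemma foata_length: "f permutes {1..n} \<Longrightarrow> length (foata n f) = n"
  using foata_perm_list unfolding perm_list_def by blast

lemma foata_adj:
  assumes fS: "f permutes {1..n}" and j: "j + 1 < n"
  shows "foata n f ! (j+1) = f (foata n f ! j) \<or>
         (foata n f ! j < foata n f ! (j+1) \<and> foata n f ! j \<le> f (foata n f ! j) \<and> cm f (foata n f ! (j+1)))"
proof -
  have pf: "permutation f" using perm_S[OF fS] .
  let ?F = "foata n f"
  let ?ms = "cycle_maxima n f"
  let ?bs = "map (cycle_from f) ?ms"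
  have lF: "length ?F = n" using foata_length[OF fS] .
  have "?F = take j ?F @ ?F ! j # ?F ! (j+1) # drop (j+2) ?F"
  proof -
    have "?F = take j ?F @ drop j ?F" by simp
    moreover have "drop j ?F = ?F ! j # drop (Suc j) ?F" using j lF by (simp add: Cons_nth_drop_Suc)
    moreover have "drop (Suc j) ?F = ?F ! (j+1) # drop (Suc (Suc j)) ?F" using j lF by (simp add: Cons_nth_drop_Suc)
    ultimately show ?thesis by simp
  qed
  then have ceq: "concat ?bs = take j ?F @ ?F ! j # ?F ! (j+1) # drop (j+2) ?F" unfolding foata_eq[symmetric] by simp
  have ne: "\<forall>b\<in>set ?bs. b \<noteq> []" using cf_nonempty[OF pf] by auto
  from concat_adj[OF ne ceq] show ?thesis
  proof
    assume "\<exists>b\<in>set ?bs. \<exists>us vs. b = us @ ?F ! j # ?F ! (j+1) # vs"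
    then obtain m us vs where "cycle_from f m = us @ ?F ! j # ?F ! (j+1) # vs" by auto
    then have "?F ! (j+1) = f (?F ! j)" by (rule cf_succ[OF pf])
    then show ?thesis by simp
  next
    assume "\<exists>us b1 b2 vs. ?bs = us @ b1 # b2 # vs \<and> ?F ! j = last b1 \<and> ?F ! (j+1) = hd b2"
    then obtain us b1 b2 vs where bs: "?bs = us @ b1 # b2 # vs" and a: "?F ! j = last b1"
      and c: "?F ! (j+1) = hd b2" by blast
    obtain us' m1 m2 vs' where ms: "?ms = us' @ m1 # m2 # vs'" and b1: "b1 = cycle_from f m1"
      and b2: "b2 = cycle_from f m2"
      using bs by (auto simp: map_eq_append_conv)
    have "m1 \<in> set ?ms" "m2 \<in> set ?ms" using ms by auto
    then have cms: "cm f m1" "cm f m2" unfolding set_cycle_maxima by auto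
    have lt: "m1 < m2" using sorted_cycle_maxima[of n f] ms by (simp add: sorted_wrt_append)
    have fa: "f (?F ! j) = m1" using a b1 cf_last[OF pf] by simp
    have "last b1 \<in> set b1" using b1 cf_nonempty[OF pf] by simp
    then have "?F ! j \<in> orb f m1" using a b1 cf_set[OF pf] by simp
    then have le: "?F ! j \<le> m1" using cm_orb_le[OF cms(1)] by blast
    have "?F ! (j+1) = m2" using c b2 cf_hd[OF pf] by simp
    then show ?thesis using fa le lt cms by simp
  qed
qed

lemma foata_first:
  assumes fS: "f permutes {1..n}" and n: "1 \<le> n"
  shows "cm f (foata n f ! 0)"
proof -
  have pf: "permutation f" using perm_S[OF fS] .
  let ?ms = "cycle_maxima n f"
  have "foata n f \<noteq> []" using foata_length[OF fS] n by auto
  then obtain m ms' where ms: "?ms = m # ms'" unfolding foata_eq by (cases ?ms) auto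
  have "foata n f = cycle_from f m @ concat (map (cycle_from f) ms')" unfolding foata_eq ms by simp
  then have "foata n f ! 0 = m" using cf_nonempty[OF pf, of m] cf_hd[OF pf, of m]
    by (simp add: nth_append hd_conv_nth)
  moreover have "cm f m" using ms set_cycle_maxima[of n f] by (metis (mono_tags) list.set_intros(1) mem_Collect_eq)
  ultimately show ?thesis by simp
qed

lemma foata_last:
  assumes fS: "f permutes {1..n}" and n: "1 \<le> n"
  shows "foata n f ! (n-1) \<le> f (foata n f ! (n-1))"
proof -
  have pf: "permutation f" using perm_S[OF fS] .
  let ?ms = "cycle_maxima n f"
  have ne: "foata n f \<noteq> []" using foata_length[OF fS] n by auto
  then have "?ms \<noteq> []" unfolding foata_eq by auto
  then obtain ms' m where ms: "?ms = ms' @ [m]" by (metis rev_exhaust)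
  have "foata n f = concat (map (cycle_from f) ms') @ cycle_from f m" unfolding foata_eq ms by simp
  then have "last (foata n f) = last (cycle_from f m)" using cf_nonempty[OF pf, of m] by simp
  moreover have "last (foata n f) = foata n f ! (n-1)" using ne foata_length[OF fS] by (simp add: last_conv_nth)
  ultimately have x: "foata n f ! (n-1) = last (cycle_from f m)" by simp
  have cmm: "cm f m" using ms set_cycle_maxima[of n f] by (metis (mono_tags) in_set_conv_decomp mem_Collect_eq)
  have "last (cycle_from f m) \<in> set (cycle_from f m)" using cf_nonempty[OF pf, of m] by simp
  then have "last (cycle_from f m) \<le> m" using cf_set[OF pf] cm_orb_le[OF cmm] by blast
  then show ?thesis using x cf_last[OF pf, of m] by simp
qed

lemma foata_peak:
  assumes fS: "f permutes {1..n}" and i: "i < n"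
  shows "left_peak (foata n f) i \<longleftrightarrow> cycle_peak n f (foata n f ! i)"
proof -
  have pf: "permutation f" using perm_S[OF fS] .
  let ?F = "foata n f"
  define x where "x = ?F ! i"
  have lF: "length ?F = n" using foata_length[OF fS] .
  have xS: "x \<in> {1..n}" using foata_set[OF fS] i lF unfolding x_def by (metis nth_mem)
  define p where "p = inv_into {1..n} f x"
  have img: "f ` {1..n} = {1..n}" using permutes_image[OF fS] .
  have pS: "p \<in> {1..n}" using xS img unfolding p_def by (metis inv_into_into)
  have fp: "f p = x" using xS img unfolding p_def by (metis f_inv_into_f)
  have inj: "inj f" using permutes_inj[OF fS] .
  have pox: "p \<in> orb f x"
  proof -
    have "x \<in> orb f p" using orb_f[of f p] fp by simp
    then show ?thesis using orb_sym[OF pf] by blast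
  qed
  have cmp: "p < x" if "cm f x" "f x < x"
  proof -
    have "p \<le> x" using cm_orb_le[OF that(1) pox] .
    moreover have "p \<noteq> x" using fp that(2) by auto
    ultimately show ?thesis by simp
  qed
  have fx1: "f x \<ge> 1" using permutes_in_image[OF fS, of x] xS by simp
  have claim1: "(i + 1 < n \<and> ?F ! (i+1) < x) \<longleftrightarrow> f x < x"
  proof
    assume a: "i + 1 < n \<and> ?F ! (i+1) < x"
    then show "f x < x" using foata_adj[OF fS, of i] unfolding x_def by auto
  next
    assume fx: "f x < x"
    show "i + 1 < n \<and> ?F ! (i+1) < x"
    proof (cases "i + 1 < n")
      case True
      then show ?thesis using foata_adj[OF fS True] fx unfolding x_def by auto
    next
      case False
      then have "i = n - 1" using i by simp
      then show ?thesis using foata_last[OF fS] fx i unfolding x_def by fastforce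
    qed
  qed
  have claim2: "(i = 0 \<or> ?F ! (i-1) < x) \<longleftrightarrow> p < x" if fx: "f x < x"
  proof (cases "i = 0")
    case True
    then have "cm f x" using foata_first[OF fS] i unfolding x_def by simp
    then show ?thesis using cmp fx True by simp
  next
    case False
    have i1: "i - 1 + 1 < n" "i - 1 + 1 = i" using i False by auto
    from foata_adj[OF fS i1(1)] have "x = f (?F ! (i-1)) \<or> (?F ! (i-1) < x \<and> cm f x)"
      unfolding i1(2) x_def by auto
    then show ?thesis
    proof
      assume "x = f (?F ! (i-1))"
      then have "p = ?F ! (i-1)" using fp inj by (simp add: inj_eq)
      then show ?thesis using False by simp
    next
      assume "?F ! (i-1) < x \<and> cm f x"
      then show ?thesis using cmp fx False by simp
    qed
  qed
  have lp: "left_peak ?F i \<longleftrightarrow> (i = 0 \<or> ?F ! (i-1) < x) \<and> (i + 1 < n \<and> ?F ! (i+1) < x)"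
    unfolding left_peak_def x_def using i lF by auto
  have cpk: "cycle_peak n f x \<longleftrightarrow> p < x \<and> f x < x"
    unfolding cycle_peak_def p_def[symmetric] using xS fx1 by auto
  show ?thesis unfolding x_def[symmetric] lp cpk claim1 using claim2 by blast
qed


lemma wip_D:
  assumes "(\<sigma>, \<pi>) \<in> WIP n"
  shows "perm_list n \<sigma>" "perm_list n \<pi>"
    "\<And>i. i + 1 < n \<Longrightarrow> max (\<sigma> ! i) (\<pi> ! i) \<le> max (\<sigma> ! (i+1)) (\<pi> ! (i+1))"
  using assms unfolding WIP_def by auto

lemma tau_nth:
  assumes d: "distinct \<sigma>" and i: "i < length \<sigma>"
  shows "tau_of \<sigma> \<pi> (\<sigma> ! i) = \<pi> ! i"
proof -
  have "(LEAST j. j < length \<sigma> \<and> \<sigma> ! j = \<sigma> ! i) = i"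
  proof (rule Least_equality)
    show "i < length \<sigma> \<and> \<sigma> ! i = \<sigma> ! i" using i by simp
    fix y assume "y < length \<sigma> \<and> \<sigma> ! y = \<sigma> ! i"
    then have "y = i" using dist_nth_neq[OF d, of y i] i by auto
    then show "i \<le> y" by simp
  qed
  then show ?thesis unfolding tau_of_def using i by simp
qed

lemma tau_perm:
  assumes w: "(\<sigma>, \<pi>) \<in> WIP n"
  shows "tau_of \<sigma> \<pi> permutes {1..n}"
proof (rule bij_imp_permutes)
  have ps: "perm_list n \<sigma>" and pp: "perm_list n \<pi>" using wip_D[OF w] by auto
  have ls: "length \<sigma> = n" "distinct \<sigma>" "set \<sigma> = {1..n}" using ps unfolding perm_list_def by auto
  have lp: "length \<pi> = n" "distinct \<pi>" "set \<pi> = {1..n}" using pp unfolding perm_list_def by auto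
  have img: "tau_of \<sigma> \<pi> ` {1..n} = {1..n}"
  proof
    show "tau_of \<sigma> \<pi> ` {1..n} \<subseteq> {1..n}"
    proof
      fix y assume "y \<in> tau_of \<sigma> \<pi> ` {1..n}"
      then obtain k where k: "k \<in> set \<sigma>" "y = tau_of \<sigma> \<pi> k" using ls by auto
      then obtain i where i: "i < n" "k = \<sigma> ! i" using k(1) ls(1) in_set_conv_nth by metis
      then have "y = \<pi> ! i" using k tau_nth[OF ls(2), of i \<pi>] ls by simp
      then show "y \<in> {1..n}" using lp i by (metis nth_mem)
    qed
    show "{1..n} \<subseteq> tau_of \<sigma> \<pi> ` {1..n}"
    proof
      fix y assume "y \<in> {1..n}"
      then obtain i where i: "i < n" "y = \<pi> ! i" using lp by (metis in_set_conv_nth)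
      then have "y = tau_of \<sigma> \<pi> (\<sigma> ! i)" using tau_nth[OF ls(2), of i \<pi>] ls by simp
      moreover have "\<sigma> ! i \<in> {1..n}" using ls i by (metis nth_mem)
      ultimately show "y \<in> tau_of \<sigma> \<pi> ` {1..n}" by blast
    qed
  qed
  have "card (tau_of \<sigma> \<pi> ` {1..n}) = card {1..n}" by (simp only: img)
  then have "inj_on (tau_of \<sigma> \<pi>) {1..n}"
    by (rule eq_card_imp_inj_on[OF finite_atLeastAtMost])
  then show "bij_betw (tau_of \<sigma> \<pi>) {1..n} {1..n}" using img unfolding bij_betw_def by simp
  fix x assume "x \<notin> {1..n}"
  then have "x \<notin> set \<sigma>" using ls by simp
  then show "tau_of \<sigma> \<pi> x = x" unfolding tau_of_def by simp
qed

lemma zip_set: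
  assumes w: "(\<sigma>, \<pi>) \<in> WIP n"
  shows "set (zip \<sigma> \<pi>) = (\<lambda>k. (k, tau_of \<sigma> \<pi> k)) ` {1..n}" "distinct (zip \<sigma> \<pi>)"
proof -
  have ps: "perm_list n \<sigma>" and pp: "perm_list n \<pi>" using wip_D[OF w] by auto
  have ls: "length \<sigma> = n" "distinct \<sigma>" "set \<sigma> = {1..n}" using ps unfolding perm_list_def by auto
  have lp: "length \<pi> = n" using pp unfolding perm_list_def by auto
  show "distinct (zip \<sigma> \<pi>)" using ls(2) by (rule distinct_zipI1)
  show "set (zip \<sigma> \<pi>) = (\<lambda>k. (k, tau_of \<sigma> \<pi> k)) ` {1..n}"
  proof
    show "set (zip \<sigma> \<pi>) \<subseteq> (\<lambda>k. (k, tau_of \<sigma> \<pi> k)) ` {1..n}"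
    proof
      fix p assume "p \<in> set (zip \<sigma> \<pi>)"
      then obtain i where i: "i < n" "p = (\<sigma> ! i, \<pi> ! i)" using ls lp by (auto simp: in_set_conv_nth)
      then have "p = (\<sigma> ! i, tau_of \<sigma> \<pi> (\<sigma> ! i))" using tau_nth[OF ls(2)] ls by simp
      moreover have "\<sigma> ! i \<in> {1..n}" using ls i by (metis nth_mem)
      ultimately show "p \<in> (\<lambda>k. (k, tau_of \<sigma> \<pi> k)) ` {1..n}" by blast
    qed
    show "(\<lambda>k. (k, tau_of \<sigma> \<pi> k)) ` {1..n} \<subseteq> set (zip \<sigma> \<pi>)"
    proof
      fix p assume "p \<in> (\<lambda>k. (k, tau_of \<sigma> \<pi> k)) ` {1..n}"
      then obtain k where k: "k \<in> {1..n}" "p = (k, tau_of \<sigma> \<pi> k)" by blast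
      then obtain i where i: "i < n" "k = \<sigma> ! i" using ls by (metis in_set_conv_nth)
      then have "p = (\<sigma> ! i, \<pi> ! i)" using k tau_nth[OF ls(2)] ls by simp
      then show "p \<in> set (zip \<sigma> \<pi>)" using i ls lp by (auto simp: in_set_conv_nth)
    qed
  qed
qed

definition key :: "(nat \<Rightarrow> bool) \<Rightarrow> nat \<times> nat \<Rightarrow> nat" where
  "key H p = 2 * max (fst p) (snd p) +
     (if snd p < fst p then (if H (fst p) then 0 else 1) else (if H (snd p) then 1 else 0))"

lemma key_bounds: "2 * max (fst p) (snd p) \<le> key H p" "key H p \<le> 2 * max (fst p) (snd p) + 1"
  unfolding key_def by auto

lemma key_hi: "snd p < fst p \<Longrightarrow> key H p = 2 * fst p + (if H (fst p) then 0 else 1)"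
  unfolding key_def by simp

lemma key_lo: "fst p < snd p \<Longrightarrow> key H p = 2 * snd p + (if H (snd p) then 1 else 0)"
  unfolding key_def by simp

lemma key_max_mono: "key H p \<le> key H q \<Longrightarrow> max (fst p) (snd p) \<le> max (fst q) (snd q)"
  using key_bounds[where p=p and H=H] key_bounds[where p=q and H=H] by linarith

lemma key_inj:
  assumes fS: "f permutes S"
  shows "inj_on (key H) ((\<lambda>k. (k, f k)) ` S)"
proof (rule inj_onI)
  fix p q assume p: "p \<in> (\<lambda>k. (k, f k)) ` S" and q: "q \<in> (\<lambda>k. (k, f k)) ` S" and e: "key H p = key H q"
  obtain a where a: "p = (a, f a)" using p by blast
  obtain c where c: "q = (c, f c)" using q by blast
  have inj: "inj f" using permutes_inj[OF fS] .
  define M where "M = max a (f a)"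
  have MM: "max c (f c) = M" using e key_bounds[where p=p and H=H] key_bounds[where p=q and H=H] a c unfolding M_def by simp
  show "p = q"
  proof (rule ccontr)
    assume "p \<noteq> q"
    then have ac: "a \<noteq> c" using a c by auto
    then have fac: "f a \<noteq> f c" using inj by (auto simp: inj_eq)
    have "(a = M \<and> f c = M \<and> f a < M \<and> c < M) \<or> (f a = M \<and> c = M \<and> a < M \<and> f c < M)"
      using MM ac fac unfolding M_def by (auto simp: max_def split: if_splits)
    then show False
    proof
      assume h: "a = M \<and> f c = M \<and> f a < M \<and> c < M"
      have p1: "fst p = M" "snd p < M" using h a by auto
      have q1: "snd q = M" "fst q < M" using h c by auto
      have "key H p = 2 * M + (if H M then 0 else 1)" using key_hi[of p H] p1 by simp
      moreover have "key H q = 2 * M + (if H M then 1 else 0)" using key_lo[of q H] q1 by simp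
      ultimately show False using e by (auto split: if_splits)
    next
      assume h: "f a = M \<and> c = M \<and> a < M \<and> f c < M"
      have p1: "snd p = M" "fst p < M" using h a by auto
      have q1: "fst q = M" "snd q < M" using h c by auto
      have "key H p = 2 * M + (if H M then 1 else 0)" using key_lo[of p H] p1 by simp
      moreover have "key H q = 2 * M + (if H M then 0 else 1)" using key_hi[of q H] q1 by simp
      ultimately show False using e by (auto split: if_splits)
    qed
  qed
qed

lemma sorted_key_unique:
  assumes inj: "inj_on k (set L1)" and d: "distinct L1" "distinct L2" and s: "set L1 = set L2"
    and so: "sorted (map k L1)" "sorted (map k L2)"
  shows "L1 = L2"
proof -
  have inj2: "inj_on k (set L2)" using inj s by simp
  have "distinct (map k L1)" "distinct (map k L2)" using d inj inj2 by (auto simp: distinct_map)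
  moreover have "set (map k L1) = set (map k L2)" using s by simp
  ultimately have "map k L1 = map k L2" using so sorted_distinct_set_unique by blast
  then show ?thesis using inj s by (simp add: inj_on_map_eq_map)
qed


lemma perm_list_facts: "perm_list n xs \<Longrightarrow> length xs = n \<and> distinct xs \<and> set xs = {1..n}"
  unfolding perm_list_def by simp

lemma wip_sorted:
  assumes w: "(\<sigma>, \<pi>) \<in> WIP n"
  shows "sorted (map (key (hatted \<sigma> \<pi>)) (zip \<sigma> \<pi>))"
proof -
  have ps: "perm_list n \<sigma>" and pp: "perm_list n \<pi>"
    and mono: "\<And>i. i + 1 < n \<Longrightarrow> max (\<sigma> ! i) (\<pi> ! i) \<le> max (\<sigma> ! (i+1)) (\<pi> ! (i+1))"
    using wip_D[OF w] by auto
  have ls: "length \<sigma> = n" "distinct \<sigma>" "set \<sigma> = {1..n}" using perm_list_facts[OF ps] by auto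
  have lp: "length \<pi> = n" "distinct \<pi>" "set \<pi> = {1..n}" using perm_list_facts[OF pp] by auto
  let ?H = "hatted \<sigma> \<pi>"
  let ?t = "tau_of \<sigma> \<pi>"
  have tS: "?t permutes {1..n}" using tau_perm[OF w] .
  have injt: "inj_on ?t {1..n}" using permutes_inj_on[OF tS] .
  show ?thesis unfolding sorted_iff_nth_Suc
  proof (intro allI impI)
    fix i assume "Suc i < length (map (key ?H) (zip \<sigma> \<pi>))"
    then have i: "i + 1 < n" using ls lp by simp
    define a b a' b' where "a = \<sigma> ! i" "b = \<pi> ! i" "a' = \<sigma> ! (i+1)" "b' = \<pi> ! (i+1)"
    have e1: "map (key ?H) (zip \<sigma> \<pi>) ! i = key ?H (a, b)" using i ls lp a_b_a'_b'_def by simp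
    have e2: "map (key ?H) (zip \<sigma> \<pi>) ! Suc i = key ?H (a', b')" using i ls lp a_b_a'_b'_def by simp
    have aS: "a \<in> {1..n}" "a' \<in> {1..n}" "b \<in> {1..n}" "b' \<in> {1..n}"
      using i ls lp a_b_a'_b'_def by (metis Suc_lessD add.commute nth_mem plus_1_eq_Suc)+
    have ta: "?t a = b" "?t a' = b'" using tau_nth[OF ls(2)] i ls a_b_a'_b'_def by auto
    have aa: "a \<noteq> a'" using dist_nth_neq[OF ls(2), of i "i+1"] i ls a_b_a'_b'_def by simp
    have bb: "b \<noteq> b'" using dist_nth_neq[OF lp(2), of i "i+1"] i lp a_b_a'_b'_def by simp
    have mo: "max a b \<le> max a' b'" using mono[OF i] a_b_a'_b'_def by simp
    show "map (key ?H) (zip \<sigma> \<pi>) ! i \<le> map (key ?H) (zip \<sigma> \<pi>) ! Suc i"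
      unfolding e1 e2
    proof (cases "max a b < max a' b'")
      case True
      then show "key ?H (a, b) \<le> key ?H (a', b')"
        using True key_bounds[where p="(a,b)" and H="?H"] key_bounds[where p="(a',b')" and H="?H"]
        unfolding fst_conv snd_conv by linarith
    next
      case False
      then have M: "max a b = max a' b'" using mo by linarith
      define M where "M = max a b"
      have "(a = M \<and> b' = M \<and> b < M \<and> a' < M) \<or> (b = M \<and> a' = M \<and> a < M \<and> b' < M)"
        using M aa bb unfolding M_def by (auto simp: max_def split: if_splits)
      then show "key ?H (a, b) \<le> key ?H (a', b')"
      proof
        assume h: "a = M \<and> b' = M \<and> b < M \<and> a' < M"
        have hat: "?H M"
        proof -
          have "inv_into {1..n} ?t M = a'" using inv_into_f_eq[OF injt aS(2)] ta h by simp
          moreover have "?t M = b" using ta h by simp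
          moreover have "2 \<le> M" "M \<le> n" using aS h by auto
          ultimately have "cycle_peak n ?t M" unfolding cycle_peak_def using h by simp
          moreover have "i + 1 < length \<sigma> \<and> \<sigma> ! i = M \<and> \<pi> ! (i+1) = M"
            using i ls h a_b_a'_b'_def by simp
          ultimately show ?thesis unfolding hatted_def using ls by blast
        qed
        have "key ?H (a, b) = 2 * M" using key_hi[where p="(a,b)" and H="?H"] h hat by simp
        moreover have "key ?H (a', b') = 2 * M + 1" using key_lo[where p="(a',b')" and H="?H"] h hat by simp
        ultimately show ?thesis by simp
      next
        assume h: "b = M \<and> a' = M \<and> a < M \<and> b' < M"
        have nhat: "\<not> ?H M"
        proof
          assume "?H M"
          then obtain l where l: "l + 1 < length \<sigma>" "\<sigma> ! l = M" "\<pi> ! (l+1) = M"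
            unfolding hatted_def by blast
          have "l = i + 1"
          proof (rule ccontr)
            assume "l \<noteq> i + 1"
            then have "\<sigma> ! l \<noteq> \<sigma> ! (i+1)" using dist_nth_neq[OF ls(2), of l "i+1"] l i ls by simp
            then show False using l h a_b_a'_b'_def by simp
          qed
          then have "\<pi> ! (i+2) = \<pi> ! i" using l h a_b_a'_b'_def by simp
          moreover have "\<pi> ! (i+2) \<noteq> \<pi> ! i" using dist_nth_neq[OF lp(2), of "i+2" i] l \<open>l = i+1\<close> ls lp by simp
          ultimately show False by simp
        qed
        have "key ?H (a, b) = 2 * M" using key_lo[where p="(a,b)" and H="?H"] h nhat by simp
        moreover have "key ?H (a', b') = 2 * M + 1" using key_hi[where p="(a',b')" and H="?H"] h nhat by simp
        ultimately show ?thesis by simp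
      qed
    qed
  qed
qed

lemma wip_determined:
  assumes w: "(\<sigma>, \<pi>) \<in> WIP n" and w': "(\<sigma>', \<pi>') \<in> WIP n"
    and t: "tau_of \<sigma> \<pi> = tau_of \<sigma>' \<pi>'" and h: "hatted \<sigma> \<pi> = hatted \<sigma>' \<pi>'"
  shows "\<sigma> = \<sigma>' \<and> \<pi> = \<pi>'"
proof -
  have "zip \<sigma> \<pi> = zip \<sigma>' \<pi>'"
  proof (rule sorted_key_unique[where k="key (hatted \<sigma> \<pi>)"])
    show "inj_on (key (hatted \<sigma> \<pi>)) (set (zip \<sigma> \<pi>))"
      unfolding zip_set(1)[OF w] by (rule key_inj[OF tau_perm[OF w]])
    show "distinct (zip \<sigma> \<pi>)" "distinct (zip \<sigma>' \<pi>')" using zip_set w w' by auto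
    show "set (zip \<sigma> \<pi>) = set (zip \<sigma>' \<pi>')" using zip_set(1)[OF w] zip_set(1)[OF w'] t by simp
    show "sorted (map (key (hatted \<sigma> \<pi>)) (zip \<sigma> \<pi>))" by (rule wip_sorted[OF w])
    show "sorted (map (key (hatted \<sigma> \<pi>)) (zip \<sigma>' \<pi>'))" unfolding h by (rule wip_sorted[OF w'])
  qed
  moreover have "length \<sigma> = length \<pi>" "length \<sigma>' = length \<pi>'"
    using wip_D[OF w] wip_D[OF w'] perm_list_facts by metis+
  ultimately show ?thesis by (metis map_fst_zip map_snd_zip)
qed


lemma wip_construct:
  fixes f :: "nat \<Rightarrow> nat" and H :: "nat \<Rightarrow> bool"
  assumes fS: "f permutes {1..n}"
  shows "\<exists>\<sigma> \<pi>. (\<sigma>, \<pi>) \<in> WIP n \<and> tau_of \<sigma> \<pi> = f \<and> (\<forall>k. cycle_peak n f k \<longrightarrow> (hatted \<sigma> \<pi> k \<longleftrightarrow> H k))"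
proof -
  define P where "P = map (\<lambda>k. (k, f k)) [1..<n+1]"
  define L where "L = sort_key (key H) P"
  define \<sigma> where "\<sigma> = map fst L"
  define \<pi> where "\<pi> = map snd L"
  have injf: "inj f" using permutes_inj[OF fS] .
  have su: "set [1..<n+1] = {1..n}" by (simp only: set_upt) auto
  have setL: "set L = (\<lambda>k. (k, f k)) ` {1..n}" unfolding L_def P_def set_sort set_map su ..
  have dP: "distinct P" unfolding P_def by (simp add: distinct_map inj_on_def)
  have dL: "distinct L" unfolding L_def using dP by simp
  have lL: "length L = n" unfolding L_def P_def by simp
  have soL: "sorted (map (key H) L)" unfolding L_def by simp
  have injk: "inj_on (key H) (set L)" unfolding setL by (rule key_inj[OF fS])
  have stL: "sorted_wrt (<) (map (key H) L)"
    using soL dL injk by (simp add: strict_sorted_iff distinct_map)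
  have pair: "snd p = f (fst p)" if "p \<in> set L" for p using that setL by auto
  have pairS: "fst p \<in> {1..n}" if "p \<in> set L" for p using that setL by auto
  have ls: "length \<sigma> = n" "length \<pi> = n" unfolding \<sigma>_def \<pi>_def using lL by auto
  have sfst: "\<sigma> ! i = fst (L ! i)" "\<pi> ! i = snd (L ! i)" if "i < n" for i
    unfolding \<sigma>_def \<pi>_def using that lL by auto
  have ps: "perm_list n \<sigma>"
  proof -
    have "inj_on fst (set L)"
    proof (rule inj_onI)
      fix p q assume pq: "p \<in> set L" "q \<in> set L" "fst p = fst q"
      then have "snd p = snd q" using pair by simp
      then show "p = q" using pq(3) by (simp add: prod_eq_iff)
    qed
    then have "distinct \<sigma>" unfolding \<sigma>_def using dL by (simp add: distinct_map)
    moreover have "set \<sigma> = {1..n}" unfolding \<sigma>_def using setL by (auto simp: image_image)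
    ultimately show ?thesis unfolding perm_list_def using ls by simp
  qed
  have pp: "perm_list n \<pi>"
  proof -
    have "inj_on snd (set L)"
    proof (rule inj_onI)
      fix p q assume pq: "p \<in> set L" "q \<in> set L" "snd p = snd q"
      then have "f (fst p) = f (fst q)" using pair by simp
      then have "fst p = fst q" using injf by (simp add: inj_eq)
      then show "p = q" using pq pair by (simp add: prod_eq_iff)
    qed
    then have "distinct \<pi>" unfolding \<pi>_def using dL by (simp add: distinct_map)
    moreover have "set \<pi> = {1..n}" unfolding \<pi>_def using setL permutes_image[OF fS] by (auto simp: image_image)
    ultimately show ?thesis unfolding perm_list_def using ls by simp
  qed
  have mono: "max (\<sigma> ! i) (\<pi> ! i) \<le> max (\<sigma> ! (i+1)) (\<pi> ! (i+1))" if i: "i + 1 < n" for i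
  proof -
    have "key H (L ! i) \<le> key H (L ! (i+1))" using soL i lL by (simp add: sorted_iff_nth_Suc)
    then have "max (fst (L ! i)) (snd (L ! i)) \<le> max (fst (L ! (i+1))) (snd (L ! (i+1)))"
      by (rule key_max_mono)
    then show ?thesis using sfst i by simp
  qed
  have w: "(\<sigma>, \<pi>) \<in> WIP n" unfolding WIP_def using ps pp mono by simp
  have dsig: "distinct \<sigma>" using ps unfolding perm_list_def by simp
  have tau: "tau_of \<sigma> \<pi> = f"
  proof
    fix x
    show "tau_of \<sigma> \<pi> x = f x"
    proof (cases "x \<in> {1..n}")
      case True
      then have "x \<in> set \<sigma>" using ps unfolding perm_list_def by simp
      then obtain i where i: "i < n" "x = \<sigma> ! i" using ls by (auto simp: in_set_conv_nth)
      have "L ! i \<in> set L" using i lL by simp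
      then have "tau_of \<sigma> \<pi> x = f x" using tau_nth[OF dsig, of i \<pi>] i ls sfst[OF i(1)] pair by simp
      then show ?thesis .
    next
      case False
      then have "x \<notin> set \<sigma>" using ps unfolding perm_list_def by simp
      then show ?thesis unfolding tau_of_def using permutes_not_in[OF fS False] by simp
    qed
  qed
  have hat: "hatted \<sigma> \<pi> k \<longleftrightarrow> H k" if cp: "cycle_peak n f k" for k
  proof -
    have kS: "k \<in> {1..n}" using cp unfolding cycle_peak_def by simp
    define j where "j = inv_into {1..n} f k"
    have img: "f ` {1..n} = {1..n}" using permutes_image[OF fS] .
    have kimg: "k \<in> f ` {1..n}" using img kS by simp
    have jS: "j \<in> {1..n}" unfolding j_def by (rule inv_into_into[OF kimg])
    have fj: "f j = k" unfolding j_def by (rule f_inv_into_f[OF kimg])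
    have jk: "j < k" and fk: "f k < k" using cp unfolding cycle_peak_def j_def by auto
    have p1: "(k, f k) \<in> set L" using setL kS by simp
    have p2: "(j, k) \<in> set L" using setL jS fj by (auto intro!: image_eqI[where x=j])
    have k1: "key H (k, f k) = 2 * k + (if H k then 0 else 1)" using key_hi[where p="(k, f k)" and H=H] fk by simp
    have k2: "key H (j, k) = 2 * k + (if H k then 1 else 0)" using key_lo[where p="(j, k)" and H=H] jk by simp
    have ex: "(\<exists>l. l + 1 < n \<and> \<sigma> ! l = k \<and> \<pi> ! (l+1) = k) \<longleftrightarrow> H k"
    proof
      assume "\<exists>l. l + 1 < n \<and> \<sigma> ! l = k \<and> \<pi> ! (l+1) = k"
      then obtain l where l: "l + 1 < n" "\<sigma> ! l = k" "\<pi> ! (l+1) = k" by blast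
      have m1: "L ! l \<in> set L" "L ! (l+1) \<in> set L" using l lL by auto
      have "fst (L ! l) = k" using l sfst[of l] by simp
      moreover have "snd (L ! l) = f (fst (L ! l))" using pair[OF m1(1)] .
      ultimately have "L ! l = (k, f k)" by (simp add: prod_eq_iff)
      moreover have "L ! (l+1) = (j, k)"
      proof -
        have s2: "snd (L ! (l+1)) = k" using l sfst by simp
        then have "f (fst (L ! (l+1))) = f j" using pair[OF m1(2)] fj by simp
        then have "fst (L ! (l+1)) = j" using injf by (simp add: inj_eq)
        then show ?thesis using s2 by (simp add: prod_eq_iff)
      qed
      moreover have "key H (L ! l) \<le> key H (L ! (l+1))" using soL l lL by (simp add: sorted_iff_nth_Suc)
      ultimately show "H k" using k1 k2 by (auto split: if_splits)
    next
      assume Hk: "H k"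
      obtain l1 where l1: "l1 < n" "L ! l1 = (k, f k)" using p1 lL by (auto simp: in_set_conv_nth)
      obtain l2 where l2: "l2 < n" "L ! l2 = (j, k)" using p2 lL by (auto simp: in_set_conv_nth)
      have kk1: "key H (L ! l1) = 2 * k" "key H (L ! l2) = 2 * k + 1" using k1 k2 l1 l2 Hk by auto
      have lt: "\<And>a b. a < b \<Longrightarrow> b < n \<Longrightarrow> key H (L ! a) < key H (L ! b)"
        using stL lL by (auto simp: sorted_wrt_iff_nth_less)
      have "l1 < l2"
      proof (rule ccontr)
        assume "\<not> l1 < l2"
        moreover have "l1 \<noteq> l2" using l1 l2 jk by auto
        ultimately have "l2 < l1" by simp
        then show False using lt[of l2 l1] l1 kk1 by simp
      qed
      moreover have "\<not> l1 + 1 < l2"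
      proof
        assume a: "l1 + 1 < l2"
        have "key H (L ! l1) < key H (L ! (l1+1))" using lt[of l1 "l1+1"] a l2 by simp
        moreover have "key H (L ! (l1+1)) < key H (L ! l2)" using lt[of "l1+1" l2] a l2 by simp
        ultimately show False using kk1 by simp
      qed
      ultimately have "l2 = l1 + 1" by simp
      then have "l1 + 1 < n \<and> \<sigma> ! l1 = k \<and> \<pi> ! (l1+1) = k" using l1 l2 sfst by simp
      then show "\<exists>l. l + 1 < n \<and> \<sigma> ! l = k \<and> \<pi> ! (l+1) = k" by blast
    qed
    show ?thesis unfolding hatted_def ls(1) tau using cp ex ls by simp
  qed
  show ?thesis using w tau hat by blast
qed

lemma perm_list_permutations_of_set: "{t. perm_list n t} = permutations_of_set {1..n}"
proof -
  have "perm_list n t \<longleftrightarrow> t \<in> permutations_of_set {1..n}" for t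
  proof
    assume "perm_list n t" then show "t \<in> permutations_of_set {1..n}"
      unfolding perm_list_def permutations_of_set_def by simp
  next
    assume t: "t \<in> permutations_of_set {1..n}"
    then have "distinct t" "set t = {1..n}" unfolding permutations_of_set_def by auto
    moreover then have "length t = n" using distinct_card[of t] by simp
    ultimately show "perm_list n t" unfolding perm_list_def by simp
  qed
  then show ?thesis by blast
qed

lemma foata_surj:
  assumes t: "perm_list n t"
  shows "\<exists>f. f permutes {1..n} \<and> foata n f = t"
proof -
  let ?A = "{f :: nat \<Rightarrow> nat. f permutes {1..n}}"
  let ?B = "{t. perm_list n t}"
  have cA: "card ?A = fact n" using card_permutations[of "{1..n::nat}" n] by simp
  have cB: "card ?B = fact n" unfolding perm_list_permutations_of_set by simp
  have fB: "finite ?B" unfolding perm_list_permutations_of_set by simp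
  have inj: "inj_on (foata n) ?A"
  proof (rule inj_onI)
    fix f g assume "f \<in> ?A" "g \<in> ?A" "foata n f = foata n g"
    then show "f = g" using foata_inj[of f n g] by simp
  qed
  have sub: "foata n ` ?A \<subseteq> ?B"
    by (rule image_subsetI) (simp add: foata_perm_list)
  have "card (foata n ` ?A) = card ?B" using card_image[OF inj] cA cB by simp
  then have eq: "foata n ` ?A = ?B" using card_subset_eq[OF fB sub] by simp
  have "t \<in> ?B" using t by simp
  then have "t \<in> foata n ` ?A" unfolding eq .
  then obtain f where "f \<in> ?A" "t = foata n f" by (rule imageE)
  then show ?thesis by auto
qed


lemma sg_abs:
  assumes "length t = n"
  shows "map (\<lambda>p. nat \<bar>p\<bar>) (map (sg t h) [0..<n]) = t"
proof (rule nth_equalityI)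
  show "length (map (\<lambda>p. nat \<bar>p\<bar>) (map (sg t h) [0..<n])) = length t" using assms by simp
  fix j assume "j < length (map (\<lambda>p. nat \<bar>p\<bar>) (map (sg t h) [0..<n]))"
  then have j: "j < n" by simp
  show "map (\<lambda>p. nat \<bar>p\<bar>) (map (sg t h) [0..<n]) ! j = t ! j"
    using sg_pm[of t h j] j by auto
qed

lemma Phi_wip:
  assumes w: "(\<sigma>, \<pi>) \<in> WIP n"
  shows "Phi \<sigma> \<pi> = map (sg (foata n (tau_of \<sigma> \<pi>)) (hatted \<sigma> \<pi>)) [0..<n]"
proof -
  have "length \<sigma> = n" using wip_D(1)[OF w] unfolding perm_list_def by simp
  then show ?thesis using Phi_sg[of \<sigma> \<pi>] by simp
qed

lemma hatted_cp:
  assumes w: "(\<sigma>, \<pi>) \<in> WIP n" and h: "hatted \<sigma> \<pi> k"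
  shows "cycle_peak n (tau_of \<sigma> \<pi>) k"
proof -
  have "length \<sigma> = n" using wip_D(1)[OF w] unfolding perm_list_def by simp
  then show ?thesis using h unfolding hatted_def by simp
qed

lemma Phi_snake:
  assumes w: "(\<sigma>, \<pi>) \<in> WIP n"
  shows "Phi \<sigma> \<pi> \<in> snakes n"
  unfolding Phi_wip[OF w] by (rule sg_snake[OF foata_perm_list[OF tau_perm[OF w]]])

theorem theorem2p1:
  fixes n :: nat
  assumes "1 \<le> n"
  shows "(\<forall>(\<sigma>, \<pi>) \<in> WIP n. Phi \<sigma> \<pi> \<in> snakes n)
         \<and> bij_betw (\<lambda>(\<sigma>, \<pi>). Phi \<sigma> \<pi>) (WIP n) (snakes n)"
proof -
  have part1: "\<forall>(\<sigma>, \<pi>) \<in> WIP n. Phi \<sigma> \<pi> \<in> snakes n" using Phi_snake by blast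
  have inj: "inj_on (\<lambda>(\<sigma>, \<pi>). Phi \<sigma> \<pi>) (WIP n)"
  proof (rule inj_onI)
    fix x y assume x: "x \<in> WIP n" and y: "y \<in> WIP n" and e: "(\<lambda>(\<sigma>, \<pi>). Phi \<sigma> \<pi>) x = (\<lambda>(\<sigma>, \<pi>). Phi \<sigma> \<pi>) y"
    obtain \<sigma> \<pi> where xx: "x = (\<sigma>, \<pi>)" by (cases x)
    obtain \<sigma>' \<pi>' where yy: "y = (\<sigma>', \<pi>')" by (cases y)
    have w: "(\<sigma>, \<pi>) \<in> WIP n" and w': "(\<sigma>', \<pi>') \<in> WIP n" using x y xx yy by auto
    have eq: "Phi \<sigma> \<pi> = Phi \<sigma>' \<pi>'" using e xx yy by simp
    let ?f = "tau_of \<sigma> \<pi>" and ?g = "tau_of \<sigma>' \<pi>'"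
    have fS: "?f permutes {1..n}" and gS: "?g permutes {1..n}" using tau_perm w w' by auto
    let ?t = "foata n ?f" and ?t' = "foata n ?g"
    have lt: "length ?t = n" "length ?t' = n" using foata_length fS gS by auto
    have e2: "map (sg ?t (hatted \<sigma> \<pi>)) [0..<n] = map (sg ?t' (hatted \<sigma>' \<pi>')) [0..<n]"
      using eq Phi_wip[OF w] Phi_wip[OF w'] by simp
    have "?t = ?t'" using sg_abs[OF lt(1), of "hatted \<sigma> \<pi>"] sg_abs[OF lt(2), of "hatted \<sigma>' \<pi>'"] e2 by simp
    then have fg: "?f = ?g" using foata_inj[OF fS gS] by simp
    have dt: "distinct ?t" and st: "set ?t = {1..n}" using foata_perm_list[OF fS] unfolding perm_list_def by auto
    have hh: "hatted \<sigma> \<pi> = hatted \<sigma>' \<pi>'"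
    proof
      fix k
      show "hatted \<sigma> \<pi> k = hatted \<sigma>' \<pi>' k"
      proof (cases "cycle_peak n ?f k")
        case False
        then show ?thesis using hatted_cp[OF w, of k] hatted_cp[OF w', of k] fg by auto
      next
        case True
        then have "k \<in> {1..n}" unfolding cycle_peak_def by simp
        then obtain j where j: "j < n" "k = ?t ! j" using st lt by (metis in_set_conv_nth)
        have "left_peak ?t j" using foata_peak[OF fS j(1)] True j by simp
        then obtain i where i: "right_valley ?t i" "pk ?t i = j" using peak_has_valley[OF dt] by blast
        have iL: "i < n" using i lt unfolding right_valley_def by simp
        have "sg ?t (hatted \<sigma> \<pi>) i = sg ?t (hatted \<sigma>' \<pi>') i"
          using e2 iL \<open>?t = ?t'\<close> by (metis (no_types, lifting) add_0 diff_zero length_upt nth_map nth_upt)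
        moreover have "?t ! i \<ge> 1" using st iL lt by (metis atLeastAtMost_iff nth_mem)
        ultimately show ?thesis using sg_rv[OF i(1)] i j by (auto split: if_splits)
      qed
    qed
    have "\<sigma> = \<sigma>' \<and> \<pi> = \<pi>'" using wip_determined[OF w w' fg hh] .
    then show "x = y" using xx yy by simp
  qed
  have surj: "snakes n \<subseteq> (\<lambda>(\<sigma>, \<pi>). Phi \<sigma> \<pi>) ` WIP n"
  proof
    fix q assume q: "q \<in> snakes n"
    define t where "t = map (\<lambda>p. nat \<bar>p\<bar>) q"
    have pt: "perm_list n t" using q unfolding snakes_def t_def by simp
    have dt: "distinct t" and lt: "length t = n" using pt unfolding perm_list_def by auto
    obtain f where fS: "f permutes {1..n}" and ft: "foata n f = t" using foata_surj[OF pt] by blast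
    define Hq where "Hq k = (\<exists>i<n. right_valley t i \<and> t ! pk t i = k \<and> q ! i < 0)" for k
    obtain \<sigma> \<pi> where w: "(\<sigma>, \<pi>) \<in> WIP n" and tau: "tau_of \<sigma> \<pi> = f"
      and hat: "\<And>k. cycle_peak n f k \<Longrightarrow> (hatted \<sigma> \<pi> k \<longleftrightarrow> Hq k)"
      using wip_construct[OF fS, of Hq] by blast
    have "q = map (sg t (hatted \<sigma> \<pi>)) [0..<n]"
    proof (rule snake_rep[OF q t_def])
      fix i assume i: "i < n" and rv: "right_valley t i"
      have pki: "pk t i < i" "left_peak t (pk t i)" using pk_props[OF dt rv] by auto
      have "cycle_peak n f (t ! pk t i)" using foata_peak[OF fS, of "pk t i"] pki i ft by simp
      then have "hatted \<sigma> \<pi> (t ! pk t i) \<longleftrightarrow> Hq (t ! pk t i)" by (rule hat)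
      also have "\<dots> \<longleftrightarrow> q ! i < 0"
      proof
        assume "Hq (t ! pk t i)"
        then obtain i' where i': "i' < n" "right_valley t i'" "t ! pk t i' = t ! pk t i" "q ! i' < 0"
          unfolding Hq_def by blast
        have "pk t i' < n" using pk_props(1)[OF dt i'(2)] i' by simp
        then have "pk t i' = pk t i" using i'(3) dist_nth_neq[OF dt, of "pk t i'" "pk t i"] pki i lt by auto
        then have "i' = i" using pk_inj[OF dt i'(2) rv] by simp
        then show "q ! i < 0" using i' by simp
      next
        assume "q ! i < 0"
        then show "Hq (t ! pk t i)" unfolding Hq_def using i rv by blast
      qed
      finally show "hatted \<sigma> \<pi> (t ! pk t i) \<longleftrightarrow> q ! i < 0" .
    qed
    then have "Phi \<sigma> \<pi> = q" using Phi_wip[OF w] tau ft by simp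
    then show "q \<in> (\<lambda>(\<sigma>, \<pi>). Phi \<sigma> \<pi>) ` WIP n" using w by force
  qed
  have "(\<lambda>(\<sigma>, \<pi>). Phi \<sigma> \<pi>) ` WIP n = snakes n"
  proof
    show "(\<lambda>(\<sigma>, \<pi>). Phi \<sigma> \<pi>) ` WIP n \<subseteq> snakes n" using Phi_snake by auto
  qed (rule surj)
  then show ?thesis using part1 inj unfolding bij_betw_def by simp
qed


end
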